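(* Let $H$ be a triangle-free simple graph and $k\ge1$. Then $\nu(I_k \vee H) = \alpha'_k(H)$ and $\tau(I_k \vee H) = k|V(H)| - \phi_k(H)$.
   Context: $I_k$ is an independent set of $k$ vertices; the join $G_1\vee G_2$ is obtained from the disjoint union of $G_1,G_2$ by adding all edges between $V(G_1)$ and $V(G_2)$. For a graph $G$, $\tau(G)$ is the minimum size of an edge set $X$ with $G-X$ triangle-free, and $\nu(G)$ is the maximum number of pairwise edge-disjoint triangles in $G$. $\alpha'_k(G)$ is the maximum number of edges of a $k$-edge-colorable subgraph of $G$. For $D\subseteq V(G)$, $\phi_k(D)=k|D|-|E(G[D])|$ and $\phi_k(G)=\max_{D\subseteq V(G)}\phi_k(D)$. *)

theory Defs
  imports Main
begin

definition simple_graph :: "'a set \<Rightarrow> 'a set set \<Rightarrow> bool" where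
  "simple_graph V E \<longleftrightarrow> finite V \<and> (\<forall>e\<in>E. e \<subseteq> V \<and> card e = 2)"

definition triangles :: "'a set \<Rightarrow> 'a set set \<Rightarrow> 'a set set" where
  "triangles V E = {t. t \<subseteq> V \<and> card t = 3 \<and> (\<forall>e. e \<subseteq> t \<and> card e = 2 \<longrightarrow> e \<in> E)}"

definition tri_edges :: "'a set \<Rightarrow> 'a set set" where
  "tri_edges t = {e. e \<subseteq> t \<and> card e = 2}"

definition triangle_free :: "'a set \<Rightarrow> 'a set set \<Rightarrow> bool" where
  "triangle_free V E \<longleftrightarrow> triangles V E = {}"

definition tri_packing_num :: "'a set \<Rightarrow> 'a set set \<Rightarrow> nat" where
  "tri_packing_num V E = Max {card T | T. T \<subseteq> triangles V E \<and>
      (\<forall>t1\<in>T. \<forall>t2\<in>T. t1 \<noteq> t2 \<longrightarrow> tri_edges t1 \<inter> tri_edges t2 = {})}"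

definition tri_cover_num :: "'a set \<Rightarrow> 'a set set \<Rightarrow> nat" where
  "tri_cover_num V E = Min {card X | X. X \<subseteq> E \<and> triangle_free V (E - X)}"

definition k_edge_colorable :: "nat \<Rightarrow> 'a set set \<Rightarrow> bool" where
  "k_edge_colorable k F \<longleftrightarrow> (\<exists>c. (\<forall>e\<in>F. c e < k) \<and>
      (\<forall>e\<in>F. \<forall>e'\<in>F. e \<noteq> e' \<and> e \<inter> e' \<noteq> {} \<longrightarrow> c e \<noteq> c e'))"

definition max_k_col_edges :: "nat \<Rightarrow> 'a set \<Rightarrow> 'a set set \<Rightarrow> nat" where
  "max_k_col_edges k V E = Max {card F | F. F \<subseteq> E \<and> k_edge_colorable k F}"

definition induced_edges :: "'a set set \<Rightarrow> 'a set \<Rightarrow> 'a set set" where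
  "induced_edges E D = {e\<in>E. e \<subseteq> D}"

definition phi_set :: "nat \<Rightarrow> 'a set set \<Rightarrow> 'a set \<Rightarrow> int" where
  "phi_set k E D = int k * int (card D) - int (card (induced_edges E D))"

definition phi :: "nat \<Rightarrow> 'a set \<Rightarrow> 'a set set \<Rightarrow> int" where
  "phi k V E = Max {phi_set k E D | D. D \<subseteq> V}"

definition join_Ik_V :: "nat \<Rightarrow> 'a set \<Rightarrow> ('a + nat) set" where
  "join_Ik_V k V = Inl ` V \<union> Inr ` {..<k}"

definition join_Ik_E :: "nat \<Rightarrow> 'a set \<Rightarrow> 'a set set \<Rightarrow> ('a + nat) set set" where
  "join_Ik_E k V E = (\<lambda>e. Inl ` e) ` E \<union> {{Inl v, Inr i} | v i. v \<in> V \<and> i < k}"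

end

theory Submission imports Defs begin

lemma pairs3: "e \<subseteq> {a,b,c} \<Longrightarrow> card e = 2 \<Longrightarrow> e = {a,b} \<or> e = {a,c} \<or> e = {b,c}"
  by (auto simp: card_2_iff)

lemma card2_inter: "card (a::'x set) = 2 \<Longrightarrow> card b = 2 \<Longrightarrow> a \<noteq> b \<Longrightarrow> card (a \<inter> b) \<le> 1"
proof (rule ccontr)
  assume a: "card a = 2" "card b = 2" "a \<noteq> b" "\<not> card (a \<inter> b) \<le> 1"
  have fa: "finite a" "finite b" using a by (auto intro: card_ge_0_finite)
  have "card (a \<inter> b) \<le> card a" "card (a \<inter> b) \<le> card b" using fa by (auto intro: card_mono)
  hence "card (a \<inter> b) = card a" "card (a \<inter> b) = card b" using a by auto
  hence "a \<inter> b = a" "a \<inter> b = b"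
    using card_subset_eq[OF fa(1), of "a \<inter> b"] card_subset_eq[OF fa(2), of "a \<inter> b"] by auto
  thus False using a by auto
qed

lemma disj_edges: "finite t1 \<Longrightarrow> card (t1 \<inter> t2) \<le> 1 \<Longrightarrow> tri_edges t1 \<inter> tri_edges t2 = {}"
proof (rule ccontr)
  assume a: "finite t1" "card (t1 \<inter> t2) \<le> 1" "tri_edges t1 \<inter> tri_edges t2 \<noteq> {}"
  then obtain e where e: "e \<subseteq> t1 \<inter> t2" "card e = 2" unfolding tri_edges_def by auto
  have "card e \<le> card (t1 \<inter> t2)" using e a by (intro card_mono) auto
  thus False using a e by auto
qed

context fixes V :: "'a set" and E :: "'a set set" and k :: nat
  assumes sg: "simple_graph V E" and tf: "triangle_free V E"
begin

lemma finV: "finite V" using sg unfolding simple_graph_def by auto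

lemma E2: "e \<in> E \<Longrightarrow> \<exists>u v. u \<noteq> v \<and> e = {u,v} \<and> u \<in> V \<and> v \<in> V"
proof -
  assume e: "e \<in> E"
  hence "e \<subseteq> V" "card e = 2" using sg unfolding simple_graph_def by auto
  thus ?thesis by (auto simp: card_2_iff)
qed

lemma E'_has_Inl: "S \<in> join_Ik_E k V E \<Longrightarrow> \<exists>a. Inl a \<in> S"
  unfolding join_Ik_E_def using E2 by fastforce

lemma E'_Inl: "{Inl a, Inl b} \<in> join_Ik_E k V E \<Longrightarrow> {a,b} \<in> E"
proof -
  assume "{Inl a, Inl b} \<in> join_Ik_E k V E"
  hence "{Inl a, Inl b} \<in> (\<lambda>e. (Inl ` e :: (_ + nat) set)) ` E" unfolding join_Ik_E_def by (auto simp: doubleton_eq_iff)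
  then obtain e where "e \<in> E" "(Inl ` e :: (_ + nat) set) = {Inl a, Inl b}" by auto
  moreover have "Inl -` (Inl ` e) = e" by auto
  moreover have "Inl -` {Inl a, Inl b} = {a,b}" by auto
  ultimately show ?thesis by metis
qed

lemma tri_intro: "u \<noteq> v \<Longrightarrow> {u,v} \<in> E \<Longrightarrow> i < k \<Longrightarrow>
   {Inl u, Inl v, Inr i} \<in> triangles (join_Ik_V k V) (join_Ik_E k V E)"
proof -
  assume a: "u \<noteq> v" "{u,v} \<in> E" "i < k"
  have uv: "u \<in> V" "v \<in> V" using a(2) sg unfolding simple_graph_def by auto
  have e1: "{Inl u, Inl v} \<in> join_Ik_E k V E" unfolding join_Ik_E_def using a
    by (auto intro!: image_eqI[where x="{u,v}"])
  have e2: "{Inl u, Inr i} \<in> join_Ik_E k V E" "{Inl v, Inr i} \<in> join_Ik_E k V E"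
    unfolding join_Ik_E_def using a uv by blast+
  show ?thesis unfolding triangles_def join_Ik_V_def
    using a uv e1 e2 pairs3[of _ "Inl u" "Inl v" "Inr i"] by auto
qed

lemma tri_elim: "t \<in> triangles (join_Ik_V k V) (join_Ik_E k V E) \<Longrightarrow>
   \<exists>u v i. u \<noteq> v \<and> {u,v} \<in> E \<and> i < k \<and> t = {Inl u, Inl v, Inr i}"
proof -
  assume t: "t \<in> triangles (join_Ik_V k V) (join_Ik_E k V E)"
  then obtain x y z where xyz: "t = {x,y,z}" "x \<noteq> y" "y \<noteq> z" "x \<noteq> z"
    unfolding triangles_def by (auto simp: card_3_iff)
  have sub: "t \<subseteq> join_Ik_V k V" using t unfolding triangles_def by auto
  have pe: "\<And>p q. p \<in> t \<Longrightarrow> q \<in> t \<Longrightarrow> p \<noteq> q \<Longrightarrow> {p,q} \<in> join_Ik_E k V E"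
    using t unfolding triangles_def by auto
  have noRR: "\<And>i j. {Inr i, Inr j} \<notin> join_Ik_E k V E"
    using E'_has_Inl by fastforce
  have inrk: "\<And>i. Inr i \<in> t \<Longrightarrow> i < k" using sub unfolding join_Ik_V_def by auto
  have one: "\<exists>u v i. u \<noteq> v \<and> {u,v} \<in> E \<and> i < k \<and> {a,b,c} = {Inl u, Inl v, Inr i}"
    if "{a,b,c} = t" "a \<noteq> b" "b \<noteq> c" "a \<noteq> c" "a = Inl u" "b = Inl v" "c = Inr i" for a b c u v i
    using that pe[of a b] inrk[of i] E'_Inl[of u v] by auto
  show ?thesis
  proof (cases x)
    case (Inl a)
    show ?thesis
    proof (cases y)
      case (Inl b)
      show ?thesis
      proof (cases z)
        case (Inl c)
        have "{a,b,c} \<in> triangles V E"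
        proof -
          have ab: "{a,b} \<in> E" "{a,c} \<in> E" "{b,c} \<in> E"
            using pe[of x y] pe[of x z] pe[of y z] xyz Inl `x = Inl a` `y = Inl b` E'_Inl by auto
          have "{a,b,c} \<subseteq> V" using ab sg unfolding simple_graph_def by auto
          moreover have "card {a,b,c} = 3" using xyz Inl `x = Inl a` `y = Inl b` by auto
          ultimately show ?thesis unfolding triangles_def using ab pairs3[of _ a b c] by blast
        qed
        thus ?thesis using tf unfolding triangle_free_def by auto
      next
        case (Inr i)
        thus ?thesis using one[of x y z] xyz Inl `x = Inl a` by auto
      qed
    next
      case (Inr i)
      show ?thesis
      proof (cases z)
        case (Inl c)
        have "{x,z,y} = t" using xyz by auto
        thus ?thesis using one[of x z y a c i] xyz Inl `x = Inl a` `y = Inr i` by auto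
      next
        case (Inr j)
        thus ?thesis using pe[of y z] xyz noRR `y = Inr i` by auto
      qed
    qed
  next
    case (Inr i)
    show ?thesis
    proof (cases y)
      case (Inl b)
      show ?thesis
      proof (cases z)
        case (Inl c)
        have "{y,z,x} = t" using xyz by auto
        thus ?thesis using one[of y z x b c i] xyz Inl `x = Inr i` `y = Inl b` by auto
      next
        case (Inr j)
        thus ?thesis using pe[of x z] xyz noRR `x = Inr i` by auto
      qed
    next
      case (Inr j)
      thus ?thesis using pe[of x y] xyz noRR `x = Inr i` by auto
    qed
  qed
qed

lemma vimage_tr: "Inl -` insert (Inr i) (Inl ` e :: ('a + nat) set) = e" by auto

lemma packing_ge:
  assumes F: "F \<subseteq> E" "k_edge_colorable k F"
  shows "\<exists>T. T \<subseteq> triangles (join_Ik_V k V) (join_Ik_E k V E) \<and>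
      (\<forall>t1\<in>T. \<forall>t2\<in>T. t1 \<noteq> t2 \<longrightarrow> tri_edges t1 \<inter> tri_edges t2 = {}) \<and> card T = card F"
proof -
  obtain c where c: "\<forall>e\<in>F. c e < k" "\<forall>e\<in>F. \<forall>e'\<in>F. e \<noteq> e' \<and> e \<inter> e' \<noteq> {} \<longrightarrow> c e \<noteq> c e'"
    using F(2) unfolding k_edge_colorable_def by blast
  define tr where "tr e = insert (Inr (c e)) (Inl ` e :: ('a + nat) set)" for e
  have inj: "inj_on tr F"
  proof (rule inj_onI)
    fix x y assume "x \<in> F" "y \<in> F" "tr x = tr y"
    thus "x = y" using vimage_tr[of "c x" x] vimage_tr[of "c y" y] unfolding tr_def by metis
  qed
  have fin: "e \<in> F \<Longrightarrow> finite e \<and> card e = 2" for e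
  proof -
    assume "e \<in> F"
    hence "e \<subseteq> V" "card e = 2" using F(1) sg unfolding simple_graph_def by auto
    thus ?thesis using finite_subset finV by blast
  qed
  have sub: "tr ` F \<subseteq> triangles (join_Ik_V k V) (join_Ik_E k V E)"
  proof
    fix t assume "t \<in> tr ` F"
    then obtain e where e: "e \<in> F" "t = tr e" by auto
    then obtain u v where uv: "u \<noteq> v" "e = {u,v}" using E2 F(1) by blast
    have "t = {Inl u, Inl v, Inr (c e)}" using e uv unfolding tr_def by auto
    thus "t \<in> triangles (join_Ik_V k V) (join_Ik_E k V E)"
      using tri_intro[of u v "c e"] uv e F(1) c(1) by auto
  qed
  have disj: "\<forall>t1\<in>tr ` F. \<forall>t2\<in>tr ` F. t1 \<noteq> t2 \<longrightarrow> tri_edges t1 \<inter> tri_edges t2 = {}"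
  proof (intro ballI impI)
    fix t1 t2 assume "t1 \<in> tr ` F" "t2 \<in> tr ` F" "t1 \<noteq> t2"
    then obtain e1 e2 where e: "e1 \<in> F" "e2 \<in> F" "t1 = tr e1" "t2 = tr e2" "e1 \<noteq> e2" by auto
    have f1: "finite t1" using fin[OF e(1)] e(3) unfolding tr_def by auto
    have "card (t1 \<inter> t2) \<le> 1"
    proof (cases "c e1 = c e2")
      case True
      hence "e1 \<inter> e2 = {}" using c(2) e by blast
      hence "t1 \<inter> t2 \<subseteq> {Inr (c e1)}" using e True unfolding tr_def by auto
      hence "card (t1 \<inter> t2) \<le> card {Inr (c e1) :: 'a + nat}" by (intro card_mono) auto
      thus ?thesis by simp
    next
      case False
      hence "t1 \<inter> t2 = Inl ` (e1 \<inter> e2)" using e unfolding tr_def by auto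
      moreover have "card (Inl ` (e1 \<inter> e2) :: ('a + nat) set) \<le> card (e1 \<inter> e2)" by (rule card_image_le) (use fin e in auto)
      moreover have "card (e1 \<inter> e2) \<le> 1" using card2_inter fin e by blast
      ultimately show ?thesis by simp
    qed
    thus "tri_edges t1 \<inter> tri_edges t2 = {}" using disj_edges f1 by blast
  qed
  show ?thesis using sub disj card_image[OF inj] by blast
qed

lemma packing_le:
  assumes T: "T \<subseteq> triangles (join_Ik_V k V) (join_Ik_E k V E)"
     "\<forall>t1\<in>T. \<forall>t2\<in>T. t1 \<noteq> t2 \<longrightarrow> tri_edges t1 \<inter> tri_edges t2 = {}"
  shows "\<exists>F. F \<subseteq> E \<and> k_edge_colorable k F \<and> card F = card T"
proof -
  define g where "g t = Inl -` t" for t :: "('a + nat) set"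
  define col where "col t = (SOME j. Inr j \<in> t)" for t :: "('a + nat) set"
  have gcol: "g t \<in> E \<and> col t < k \<and> t = insert (Inr (col t)) (Inl ` g t) \<and> card (g t) = 2" if tT: "t \<in> T" for t
  proof -
    obtain u v i where uvi: "u \<noteq> v" "{u,v} \<in> E" "i < k" "t = {Inl u, Inl v, Inr i}"
      using tri_elim T(1) tT by blast
    have "g t = {u,v}" unfolding g_def uvi(4) by auto
    moreover have "col t = i" unfolding col_def uvi(4) by (rule some_equality) auto
    ultimately show ?thesis using uvi by auto
  qed
  have gE: "t \<in> T \<Longrightarrow> g t \<in> E" and gk: "t \<in> T \<Longrightarrow> col t < k" for t using gcol by blast+
  have inj: "inj_on g T"
  proof (rule inj_onI, rule ccontr)
    fix t1 t2 assume a: "t1 \<in> T" "t2 \<in> T" "g t1 = g t2" "t1 \<noteq> t2"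
    have "card (Inl ` g t1 :: ('a + nat) set) = 2" using gcol[OF a(1)] by (simp add: card_image)
    moreover have "Inl ` g t1 \<subseteq> t1" "Inl ` g t1 \<subseteq> t2" using gcol[OF a(1)] gcol[OF a(2)] a(3) by blast+
    ultimately have "Inl ` g t1 \<in> tri_edges t1 \<inter> tri_edges t2" unfolding tri_edges_def by auto
    thus False using T(2) a by blast
  qed
  define c where "c e = col (the_inv_into T g e)" for e
  have "k_edge_colorable k (g ` T)" unfolding k_edge_colorable_def
  proof (intro exI[of _ c] conjI ballI impI)
    fix e assume "e \<in> g ` T"
    then obtain t where t: "t \<in> T" "e = g t" by auto
    thus "c e < k" unfolding c_def using the_inv_into_f_f[OF inj t(1)] gk[OF t(1)] by simp
  next
    fix e e' assume a: "e \<in> g ` T" "e' \<in> g ` T" "e \<noteq> e' \<and> e \<inter> e' \<noteq> {}"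
    then obtain t t' where t: "t \<in> T" "e = g t" "t' \<in> T" "e' = g t'" by auto
    have ct: "c e = col t" "c e' = col t'" unfolding c_def using the_inv_into_f_f[OF inj] t by auto
    have tt: "t \<noteq> t'" using t a by auto
    obtain w where w: "w \<in> e" "w \<in> e'" using a by auto
    show "c e \<noteq> c e'"
    proof
      assume eq: "c e = c e'"
      have "{Inl w, Inr (col t)} \<subseteq> t" "{Inl w, Inr (col t)} \<subseteq> t'"
        proof -
        have h1: "t = insert (Inr (col t)) (Inl ` g t)" "t' = insert (Inr (col t')) (Inl ` g t')"
          using gcol[OF t(1)] gcol[OF t(3)] by blast+
        have "col t = col t'" using eq ct by simp
        thus "{Inl w, Inr (col t)} \<subseteq> t" "{Inl w, Inr (col t)} \<subseteq> t'"
          using w t h1 by (metis empty_subsetI image_eqI insertCI insert_subset)+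
      qed
      moreover have "card {Inl w, Inr (col t) :: 'a + nat} = 2" by simp
      ultimately have "{Inl w, Inr (col t)} \<in> tri_edges t \<inter> tri_edges t'" unfolding tri_edges_def by auto
      thus False using T(2) t tt by blast
    qed
  qed
  moreover have "g ` T \<subseteq> E" using gE by blast
  ultimately show ?thesis using card_image[OF inj] by blast
qed

lemma finE: "finite E"
proof -
  have "E \<subseteq> Pow V" using sg unfolding simple_graph_def by auto
  thus ?thesis using finV by (meson finite_Pow_iff finite_subset)
qed

lemma finE': "finite (join_Ik_E k V E)"
proof -
  have "join_Ik_E k V E \<subseteq> (\<lambda>e. Inl ` e) ` E \<union> (\<lambda>(v,i). {Inl v, Inr i}) ` (V \<times> {..<k})"
    unfolding join_Ik_E_def by auto
  moreover have "finite ((\<lambda>e. (Inl ` e :: ('a+nat) set)) ` E \<union> (\<lambda>(v,i). {Inl v, Inr i}) ` (V \<times> {..<k}))"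
    using finE finV by auto
  ultimately show ?thesis by (rule finite_subset)
qed

lemma inj_pair: "inj_on (\<lambda>(i,v). {Inl v, Inr i} :: ('a + nat) set) S"
  by (rule inj_onI) (auto simp: doubleton_eq_iff)

lemma inj_Inl_img: "inj_on (\<lambda>e. Inl ` e :: ('a + nat) set) S"
proof (rule inj_onI)
  fix x y :: "'a set" assume "Inl ` x = (Inl ` y :: ('a + nat) set)"
  hence "Inl -` (Inl ` x :: ('a + nat) set) = Inl -` (Inl ` y :: ('a + nat) set)" by simp
  thus "x = y" by auto
qed

lemma card_A: "card ((\<lambda>(i,v). {Inl v, Inr i} :: ('a + nat) set) ` (SIGMA i:{..<k}. V - D i))
   = (\<Sum>i<k. card (V - D i))"
  using card_image[OF inj_pair] finV by simp

lemma tri_mono: "E1 \<subseteq> E2 \<Longrightarrow> triangles W E1 \<subseteq> triangles W E2"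
  unfolding triangles_def by auto

lemma cover_upper:
  assumes D0: "D0 \<subseteq> V"
  shows "\<exists>X. X \<subseteq> join_Ik_E k V E \<and> triangle_free (join_Ik_V k V) (join_Ik_E k V E - X)
     \<and> int (card X) = int k * int (card V) - phi_set k E D0"
proof -
  define A0 where "A0 = (\<lambda>(i,v). {Inl v, Inr i} :: ('a + nat) set) ` (SIGMA i:{..<k}. V - D0)"
  define B0 where "B0 = (\<lambda>e. Inl ` e :: ('a + nat) set) ` induced_edges E D0"
  have finI: "finite (induced_edges E D0)" using finE unfolding induced_edges_def by auto
  have cA: "card A0 = k * card (V - D0)" unfolding A0_def using card_A[of "\<lambda>_. D0"] by simp
  have cB: "card B0 = card (induced_edges E D0)" unfolding B0_def using card_image[OF inj_Inl_img] by blast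
  have dis: "A0 \<inter> B0 = {}" unfolding A0_def B0_def by auto
  have fA: "finite A0" unfolding A0_def using finV by auto
  have fB: "finite B0" unfolding B0_def using finI by auto
  have cX: "card (A0 \<union> B0) = k * card (V - D0) + card (induced_edges E D0)"
    using card_Un_disjoint[OF fA fB dis] cA cB by simp
  have cVD: "int (card (V - D0)) = int (card V) - int (card D0)"
    using card_Diff_subset[OF finite_subset[OF D0 finV] D0] card_mono[OF finV D0] by simp
  have sub: "A0 \<union> B0 \<subseteq> join_Ik_E k V E"
    unfolding A0_def B0_def join_Ik_E_def induced_edges_def by auto
  have tf0: "triangle_free (join_Ik_V k V) (join_Ik_E k V E - (A0 \<union> B0))"
    unfolding triangle_free_def
  proof (rule ccontr)
    assume "triangles (join_Ik_V k V) (join_Ik_E k V E - (A0 \<union> B0)) \<noteq> {}"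
    then obtain t where t: "t \<in> triangles (join_Ik_V k V) (join_Ik_E k V E - (A0 \<union> B0))" by auto
    hence "t \<in> triangles (join_Ik_V k V) (join_Ik_E k V E)" using tri_mono[of "join_Ik_E k V E - (A0 \<union> B0)"] by blast
    then obtain u v i where uvi: "u \<noteq> v" "{u,v} \<in> E" "i < k" "t = {Inl u, Inl v, Inr i}"
      using tri_elim by blast
    have pe: "\<And>p. p \<subseteq> t \<Longrightarrow> card p = 2 \<Longrightarrow> p \<notin> A0 \<union> B0" using t unfolding triangles_def by auto
    have uvV: "u \<in> V" "v \<in> V" using uvi(2) sg unfolding simple_graph_def by auto
    have "u \<in> D0"
    proof (rule ccontr)
      assume "u \<notin> D0"
      hence "{Inl u, Inr i} \<in> A0" unfolding A0_def using uvV uvi(3) by force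
      thus False using pe[of "{Inl u, Inr i}"] uvi(4) by auto
    qed
    moreover have "v \<in> D0"
    proof (rule ccontr)
      assume "v \<notin> D0"
      hence "{Inl v, Inr i} \<in> A0" unfolding A0_def using uvV uvi(3) by force
      thus False using pe[of "{Inl v, Inr i}"] uvi(4) by auto
    qed
    ultimately have "{u,v} \<in> induced_edges E D0" using uvi(2) unfolding induced_edges_def by auto
    hence "Inl ` {u,v} \<in> B0" unfolding B0_def by blast
    thus False using pe[of "{Inl u, Inl v}"] uvi(1,4) by auto
  qed
  have "int (card (A0 \<union> B0)) = int k * int (card V) - phi_set k E D0"
  proof -
    have "int k * int (card (V - D0)) = int k * int (card V) - int k * int (card D0)"
      using cVD by (simp add: right_diff_distrib)
    thus ?thesis unfolding phi_set_def cX by simp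
  qed
  thus ?thesis using sub tf0 by blast
qed

lemma cover_lower:
  assumes k: "k \<ge> 1" and X: "X \<subseteq> join_Ik_E k V E" "triangle_free (join_Ik_V k V) (join_Ik_E k V E - X)"
  shows "\<exists>D \<subseteq> V. int (card X) \<ge> int k * int (card V) - phi_set k E D"
proof -
  define D where "D i = {v \<in> V. {Inl v, Inr i} \<notin> X}" for i
  define A where "A = (\<lambda>(i,v). {Inl v, Inr i} :: ('a + nat) set) ` (SIGMA i:{..<k}. V - D i)"
  define U where "U = (\<Union>i<k. induced_edges E (D i))"
  define B where "B = (\<lambda>e. Inl ` e :: ('a + nat) set) ` U"
  have DV: "D i \<subseteq> V" for i unfolding D_def by auto
  have finU: "finite U" using finE unfolding U_def induced_edges_def by auto
  have cA: "card A = (\<Sum>i<k. card (V - D i))" unfolding A_def by (rule card_A)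
  have cB: "card B = card U" unfolding B_def using card_image[OF inj_Inl_img] by blast
  have dis: "A \<inter> B = {}" unfolding A_def B_def by auto
  have fA: "finite A" unfolding A_def using finV by auto
  have fB: "finite B" unfolding B_def using finU by auto
  have AX: "A \<subseteq> X" unfolding A_def D_def by auto
  have BX: "B \<subseteq> X"
  proof
    fix f assume "f \<in> B"
    then obtain e i where ei: "i < k" "e \<in> induced_edges E (D i)" "f = Inl ` e" unfolding B_def U_def by auto
    then obtain u v where uv: "u \<noteq> v" "e = {u,v}" "u \<in> V" "v \<in> V" using E2 unfolding induced_edges_def by blast
    have uD: "u \<in> D i" "v \<in> D i" using ei uv unfolding induced_edges_def by auto
    show "f \<in> X"
    proof (rule ccontr)
      assume nf: "f \<notin> X"
      let ?t = "{Inl u, Inl v, Inr i} :: ('a + nat) set"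
      have t1: "?t \<in> triangles (join_Ik_V k V) (join_Ik_E k V E)"
        using tri_intro[of u v i] uv ei unfolding induced_edges_def by auto
      have "?t \<in> triangles (join_Ik_V k V) (join_Ik_E k V E - X)"
      proof -
        have "\<And>p. p \<subseteq> ?t \<Longrightarrow> card p = 2 \<Longrightarrow> p \<notin> X"
        proof -
          fix p assume "p \<subseteq> ?t" "card p = 2"
          hence "p = {Inl u, Inl v} \<or> p = {Inl u, Inr i} \<or> p = {Inl v, Inr i}" by (rule pairs3)
          thus "p \<notin> X" using nf ei(3) uv(2) uD unfolding D_def by auto
        qed
        thus ?thesis using t1 unfolding triangles_def by auto
      qed
      thus False using X(2) unfolding triangle_free_def by auto
    qed
  qed
  have fX: "finite X" using finE' X(1) by (rule finite_subset[rotated])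
  have "card A + card B \<le> card X"
    using card_Un_disjoint[OF fA fB dis] card_mono[OF fX, of "A \<union> B"] AX BX by simp
  hence n: "(\<Sum>i<k. card V - card (D i)) + card U \<le> card X"
    using cA cB card_Diff_subset[OF finite_subset[OF DV finV] DV] by simp
  have eqN: "(\<Sum>i<k. int (card V) - int (card (D i))) = int (\<Sum>i<k. card V - card (D i))"
    unfolding of_nat_sum using card_mono[OF finV DV] by (intro sum.cong) (auto simp: of_nat_diff)
  have S1: "int (card X) \<ge> (\<Sum>i<k. int (card V) - int (card (D i))) + int (card U)"
    unfolding eqN using n by (metis of_nat_add of_nat_le_iff)
  have Ub: "card (induced_edges E (D i)) \<le> card U" if "i < k" for i
    using card_mono[OF finU] that unfolding U_def by blast
  hence S2: "(\<Sum>i<k. int (card (induced_edges E (D i)))) \<le> (\<Sum>i<k. int (card U))"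
    by (intro sum_mono) simp
  define a where "a i = int (card (D i))" for i
  define b where "b i = int (card (induced_edges E (D i)))" for i
  define N where "N = int (card V)"
  define x where "x = int (card X)"
  define u where "u = int (card U)"
  define K where "K = int k"
  have S1a: "x \<ge> K * N - (\<Sum>i<k. a i) + u"
    using S1 unfolding a_def N_def x_def u_def K_def by (simp add: sum_subtractf)
  have S2a: "(\<Sum>i<k. b i) \<le> K * u" using S2 unfolding b_def u_def K_def by simp
  have K0: "K \<ge> 1" using k unfolding K_def by simp
  show ?thesis
  proof (rule ccontr)
    assume "\<not> ?thesis"
    note nt = this
    have lt: "\<forall>i<k. K * a i - b i < K * N - x"
    proof (intro allI impI)
      fix i assume "i < k"
      have "\<not> (int (card X) \<ge> int k * int (card V) - phi_set k E (D i))" using nt DV[of i] by blast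
      moreover have "phi_set k E (D i) = K * a i - b i" unfolding phi_set_def a_def b_def K_def by simp
      ultimately show "K * a i - b i < K * N - x" unfolding x_def N_def K_def by linarith
    qed
    have "(\<Sum>i<k. K * a i - b i) < (\<Sum>i<k. K * N - x)"
      using k lt by (intro sum_strict_mono) (auto simp: lessThan_empty_iff)
    hence L: "K * (\<Sum>i<k. a i) - (\<Sum>i<k. b i) < K * (K * N - x)"
      unfolding K_def by (simp add: sum_subtractf sum_distrib_left)
    have S1': "K * x \<ge> K * (K * N - (\<Sum>i<k. a i) + u)"
      using S1a K0 by (intro mult_left_mono) auto
    have e1: "K * (K * N - (\<Sum>i<k. a i) + u) = K * (K * N) - K * (\<Sum>i<k. a i) + K * u"
      by (simp add: distrib_left right_diff_distrib)
    have e2: "K * (K * N - x) = K * (K * N) - K * x" by (simp add: right_diff_distrib)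
    show False using L S1' S2a e1 e2 by linarith
  qed
qed

end

theorem mainTheorem7:
  fixes V :: "'a set" and E :: "'a set set" and k :: nat
  assumes "simple_graph V E" and "triangle_free V E" and "k \<ge> 1"
  shows "tri_packing_num (join_Ik_V k V) (join_Ik_E k V E) = max_k_col_edges k V E
       \<and> int (tri_cover_num (join_Ik_V k V) (join_Ik_E k V E)) = int k * int (card V) - phi k V E"
proof
  have P: "{card T |T. T \<subseteq> triangles (join_Ik_V k V) (join_Ik_E k V E) \<and>
      (\<forall>t1\<in>T. \<forall>t2\<in>T. t1 \<noteq> t2 \<longrightarrow> tri_edges t1 \<inter> tri_edges t2 = {})}
     = {card F |F. F \<subseteq> E \<and> k_edge_colorable k F}"
  proof (rule set_eqI, rule iffI)
    fix n assume "n \<in> {card T |T. T \<subseteq> triangles (join_Ik_V k V) (join_Ik_E k V E) \<and>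
      (\<forall>t1\<in>T. \<forall>t2\<in>T. t1 \<noteq> t2 \<longrightarrow> tri_edges t1 \<inter> tri_edges t2 = {})}"
    then obtain T where T: "n = card T" "T \<subseteq> triangles (join_Ik_V k V) (join_Ik_E k V E)"
      "\<forall>t1\<in>T. \<forall>t2\<in>T. t1 \<noteq> t2 \<longrightarrow> tri_edges t1 \<inter> tri_edges t2 = {}" by blast
    obtain F where F: "F \<subseteq> E" "k_edge_colorable k F" "card F = card T"
      using packing_le[OF assms(1,2) T(2,3)] by blast
    have "n = card F \<and> F \<subseteq> E \<and> k_edge_colorable k F" using T(1) F by simp
    thus "n \<in> {card F |F. F \<subseteq> E \<and> k_edge_colorable k F}" by blast
  next
    fix n assume "n \<in> {card F |F. F \<subseteq> E \<and> k_edge_colorable k F}"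
    then obtain F where F: "n = card F" "F \<subseteq> E" "k_edge_colorable k F" by blast
    obtain T where T: "T \<subseteq> triangles (join_Ik_V k V) (join_Ik_E k V E)"
      "\<forall>t1\<in>T. \<forall>t2\<in>T. t1 \<noteq> t2 \<longrightarrow> tri_edges t1 \<inter> tri_edges t2 = {}" "card T = card F"
      using packing_ge[OF assms(1,2) F(2,3)] by blast
    have "n = card T" using T(3) F(1) by simp
    thus "n \<in> {card T |T. T \<subseteq> triangles (join_Ik_V k V) (join_Ik_E k V E) \<and>
      (\<forall>t1\<in>T. \<forall>t2\<in>T. t1 \<noteq> t2 \<longrightarrow> tri_edges t1 \<inter> tri_edges t2 = {})}" using T(1,2) `n = card T` by blast
  qed
  thus "tri_packing_num (join_Ik_V k V) (join_Ik_E k V E) = max_k_col_edges k V E"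
    unfolding tri_packing_num_def max_k_col_edges_def by simp
next
  have fV: "finite V" using finV[OF assms(1,2)] .
  have PS: "{phi_set k E D | D. D \<subseteq> V} = phi_set k E ` Pow V" by auto
  have fPS: "finite {phi_set k E D | D. D \<subseteq> V}" unfolding PS using fV by simp
  have nPS: "{phi_set k E D | D. D \<subseteq> V} \<noteq> {}" by blast
  have "phi k V E \<in> {phi_set k E D | D. D \<subseteq> V}" unfolding phi_def by (rule Max_in[OF fPS nPS])
  hence "\<exists>D. phi k V E = phi_set k E D \<and> D \<subseteq> V" unfolding mem_Collect_eq .
  then obtain D0 where D0': "phi k V E = phi_set k E D0" "D0 \<subseteq> V" by (elim exE conjE)
  have D0: "D0 \<subseteq> V" "phi_set k E D0 = phi k V E" using D0' by simp_all
  have ge: "D \<subseteq> V \<Longrightarrow> phi_set k E D \<le> phi k V E" for D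
    unfolding phi_def using Max_ge[OF fPS] by blast
  obtain X0 where X0: "X0 \<subseteq> join_Ik_E k V E" "triangle_free (join_Ik_V k V) (join_Ik_E k V E - X0)"
     "int (card X0) = int k * int (card V) - phi_set k E D0"
    using cover_upper[OF assms(1,2) D0(1)] by blast
  define C where "C = {card X | X. X \<subseteq> join_Ik_E k V E \<and> triangle_free (join_Ik_V k V) (join_Ik_E k V E - X)}"
  have "C \<subseteq> card ` Pow (join_Ik_E k V E)" unfolding C_def by auto
  moreover have "finite (card ` Pow (join_Ik_E k V E))" using finE'[OF assms(1,2)] by simp
  ultimately have fC: "finite C" by (rule finite_subset)
  have "Min C = card X0"
  proof (rule Min_eqI[OF fC])
    fix y assume "y \<in> C"
    then obtain X where X: "y = card X" "X \<subseteq> join_Ik_E k V E"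
      "triangle_free (join_Ik_V k V) (join_Ik_E k V E - X)" unfolding C_def by blast
    have "\<exists>D \<subseteq> V. int (card X) \<ge> int k * int (card V) - phi_set k E D"
      by (rule cover_lower[OF assms(1,2,3) X(2,3)])
    then obtain D where D: "D \<subseteq> V" "int (card X) \<ge> int k * int (card V) - phi_set k E D"
      by (elim exE conjE) simp
    have "int (card X0) \<le> int y" using X(1) D ge[OF D(1)] X0(3) D0(2) by linarith
    thus "card X0 \<le> y" by simp
  next
    show "card X0 \<in> C" unfolding C_def using X0 by blast
  qed
  thus "int (tri_cover_num (join_Ik_V k V) (join_Ik_E k V E)) = int k * int (card V) - phi k V E"
    unfolding tri_cover_num_def C_def[symmetric] using X0(3) D0(2) by simp
qed

end
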